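(* Consider $R_0(s)=\int_0^{\bar\theta}J(\theta)s(\theta)\,dF(\theta)$. The following are equivalent: (a) $J$ is nondecreasing on $\Theta$; (b) for all nondecreasing $s,\hat s:\Theta\to[0,1]$ with $\hat s\in\mathrm{MPS}(s)$, $R_0(s)\ge R_0(\hat s)$ (offering more positional-good levels, i.e., a finer allocation, always weakly increases revenue); (c) full separation $s=F$ maximizes $R_0$ over $\mathcal S(0)$.
   Context: Let $0<\bar\theta<\infty$, $\Theta=[0,\bar\theta]$, $F$ a cdf on $\Theta$ with continuous, strictly positive density $f$, $dF=f\,d\theta$, and $J(\theta)=\theta-\frac{1-F(\theta)}{f(\theta)}$. For bounded measurable $a,b$ on $\Theta$, write $b\in\mathrm{MPS}(a)$ if $\int_x^{\bar\theta}b\,dF\le\int_x^{\bar\theta}a\,dF$ for all $x\in\Theta$, with equality at $x=0$. $\mathcal S(0)$ is the set of nondecreasing $s:\Theta\to[0,1]$ with $s\in\mathrm{MPS}(F)$ (feasible interim statuses when exclusion is impossible and the lowest level is free). $R_0(s)$ is the seller's revenue in this setting. *)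

theory Defs
  imports "HOL-Analysis.Analysis"
begin

text \<open>Type space Theta = [0, tb]; density f; integrals w.r.t. dF = f d theta are
  Henstock-Kurzweil integrals of (g * f) over subintervals of Theta.\<close>

definition virt_val :: "(real \<Rightarrow> real) \<Rightarrow> (real \<Rightarrow> real) \<Rightarrow> real \<Rightarrow> real" where
  "virt_val F f \<theta> = \<theta> - (1 - F \<theta>) / f \<theta>"

text \<open>b \<in> MPS(a): upper tail integrals of b w.r.t. dF are dominated by those of a,
  with equality at x = 0.\<close>
definition MPS :: "real \<Rightarrow> (real \<Rightarrow> real) \<Rightarrow> (real \<Rightarrow> real) \<Rightarrow> (real \<Rightarrow> real) \<Rightarrow> bool" where
  "MPS tb f b a \<longleftrightarrow>
     (\<forall>x\<in>{0..tb}. integral {x..tb} (\<lambda>t. b t * f t) \<le> integral {x..tb} (\<lambda>t. a t * f t)) \<and>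
     integral {0..tb} (\<lambda>t. b t * f t) = integral {0..tb} (\<lambda>t. a t * f t)"

definition status_fn :: "real \<Rightarrow> (real \<Rightarrow> real) \<Rightarrow> bool" where
  "status_fn tb s \<longleftrightarrow> mono_on {0..tb} s \<and> (\<forall>t\<in>{0..tb}. 0 \<le> s t \<and> s t \<le> 1)"

definition S0 :: "real \<Rightarrow> (real \<Rightarrow> real) \<Rightarrow> (real \<Rightarrow> real) \<Rightarrow> (real \<Rightarrow> real) set" where
  "S0 tb F f = {s. status_fn tb s \<and> MPS tb f s F}"

definition R0 :: "real \<Rightarrow> (real \<Rightarrow> real) \<Rightarrow> (real \<Rightarrow> real) \<Rightarrow> (real \<Rightarrow> real) \<Rightarrow> real" where
  "R0 tb F f s = integral {0..tb} (\<lambda>t. virt_val F f t * s t * f t)"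

end

theory Submission
  imports Defs
begin

lemma mono_cont_integrable:
  fixes s g :: "real \<Rightarrow> real"
  assumes "mono_on {a..b} s" "continuous_on {a..b} g"
  shows "(\<lambda>t. s t * g t) integrable_on {a..b}"
proof -
  have "space lborel = space lebesgue" "sets borel \<subseteq> sets lebesgue"
    by force+
  then have sb: "s \<in> borel_measurable (lebesgue_on {a..b})"
    by (metis assms(1) borel_measurable_mono_on_fnc borel_measurable_subalgebra mono_restrict_space space_lborel space_restrict_space)
  have "s ` {a..b} \<subseteq> {s a..s b}"
    using assms(1) by (auto simp: mono_on_def)
  then have bd: "bounded (s ` {a..b})"
    by (meson bounded_closed_interval bounded_subset)
  have "(\<lambda>t. s t * g t) absolutely_integrable_on {a..b}"
    by (rule absolutely_integrable_bounded_measurable_product_real[OF sb _ bd absolutely_integrable_continuous_real[OF assms(2)]]) auto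
  then show ?thesis using set_lebesgue_integral_eq_integral(1) by blast
qed

lemma smvt_nonneg:
  fixes g h :: "real \<Rightarrow> real"
  assumes ab: "a \<le> b" and g: "mono_on {a..b} g" and h: "h integrable_on {a..b}"
    and D: "\<forall>x\<in>{a..b}. integral {x..b} h \<ge> 0" and z: "integral {a..b} h = 0"
  shows "integral {a..b} (\<lambda>x. g x * h x) \<ge> 0"
proof -
  have gm: "\<And>x y. \<lbrakk>a \<le> x; x \<le> y; y \<le> b\<rbrakk> \<Longrightarrow> g x \<le> g y"
    using g by (auto simp: mono_on_def)
  obtain c where c: "c \<in> {a..b}"
    and hi: "((\<lambda>x. g x * h x) has_integral (g a * integral {a..c} h + g b * integral {c..b} h)) {a..b}"
    using second_mean_value_theorem_full[OF h ab, of g] gm by blast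
  have "integral {a..c} h + integral {c..b} h = integral {a..b} h"
    using c h Henstock_Kurzweil_Integration.integral_combine[where a=a and c=c and b=b and f=h] by auto
  then have e: "integral {a..c} h = - integral {c..b} h" using z by simp
  have "g a \<le> g b" using gm ab by auto
  moreover have "integral {c..b} h \<ge> 0" using D c by blast
  ultimately have "g a * integral {a..c} h + g b * integral {c..b} h \<ge> 0"
    unfolding e by (simp add: algebra_simps) (metis diff_ge_0_iff_ge mult_nonneg_nonneg left_diff_distrib)
  then show ?thesis using hi integral_unique by metis
qed

theorem mainTheorem11:
  fixes tb :: real and F f :: "real \<Rightarrow> real"
  assumes tb_pos: "0 < tb"
    and f_cont: "continuous_on {0..tb} f"
    and f_pos: "\<forall>t\<in>{0..tb}. 0 < f t"
    and F_def: "\<forall>t\<in>{0..tb}. F t = integral {0..t} f"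
    and F_total: "integral {0..tb} f = 1"
  shows "(mono_on {0..tb} (virt_val F f) \<longleftrightarrow>
           (\<forall>s s'. status_fn tb s \<and> status_fn tb s' \<and> MPS tb f s' s \<longrightarrow>
                    R0 tb F f s' \<le> R0 tb F f s))
       \<and> (mono_on {0..tb} (virt_val F f) \<longleftrightarrow>
           (\<forall>s\<in>S0 tb F f. R0 tb F f s \<le> R0 tb F f F))"
proof -
  define J where "J = virt_val F f"
  have fint: "f integrable_on {0..tb}"
    using f_cont integrable_continuous_interval by blast
  have Fcont: "continuous_on {0..tb} F"
    using continuous_on_eq[OF indefinite_integral_continuous_1[OF fint]] F_def by auto
  have Jcont: "continuous_on {0..tb} J"
    unfolding J_def virt_val_def
    using f_pos by (intro continuous_intros Fcont f_cont) auto
  obtain m where m0: "m > 0" and mle: "\<And>t. t \<in> {0..tb} \<Longrightarrow> m \<le> f t"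
  proof -
    obtain t0 where "t0 \<in> {0..tb}" "\<forall>t\<in>{0..tb}. f t0 \<le> f t"
      using continuous_attains_inf[OF compact_Icc _ f_cont] tb_pos by auto
    then show ?thesis using that[of "f t0"] f_pos by auto
  qed
  have Fdiff: "F v - F u = integral {u..v} f" if "0 \<le> u" "u \<le> v" "v \<le> tb" for u v
  proof -
    have "f integrable_on {0..v}"
      using fint by (rule integrable_on_subinterval) (use that in auto)
    then have "integral {0..u} f + integral {u..v} f = integral {0..v} f"
      using Henstock_Kurzweil_Integration.integral_combine[where a=0 and c=u and b=v and f=f] that by auto
    then show ?thesis using F_def that by auto
  qed
  have Fgrow: "F v - F u \<ge> m * (v - u)" if "0 \<le> u" "u \<le> v" "v \<le> tb" for u v
  proof -
    have "f integrable_on {u..v}"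
      using fint by (rule integrable_on_subinterval) (use that in auto)
    then have "integral {u..v} (\<lambda>_. m) \<le> integral {u..v} f"
      using mle that by (intro integral_le) auto
    then show ?thesis using Fdiff[OF that] that by (simp add: mult.commute)
  qed
  have F0: "F 0 = 0" using F_def tb_pos by auto
  have Ftb: "F tb = 1" using F_def F_total tb_pos by auto
  have Fmono: "F u \<le> F v" if "0 \<le> u" "u \<le> v" "v \<le> tb" for u v
    using Fgrow[OF that] mult_nonneg_nonneg[of m "v-u"] m0 that by linarith
  have Fstat: "status_fn tb F"
  proof -
    have "F u \<le> F v" if "u \<in> {0..tb}" "v \<in> {0..tb}" "u \<le> v" for u v
      using Fmono[of u v] that by auto
    moreover have "0 \<le> F t \<and> F t \<le> 1" if "t \<in> {0..tb}" for t
      using Fmono[of 0 t] Fmono[of t tb] that F0 Ftb by auto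
    ultimately show ?thesis unfolding status_fn_def mono_on_def monotone_on_def by auto
  qed
  have sint: "(\<lambda>t. s t * g t) integrable_on {z..tb}"
    if "status_fn tb s" "continuous_on {0..tb} g" "z \<in> {0..tb}" for s g z
  proof (rule mono_cont_integrable)
    show "mono_on {z..tb} s" using that unfolding status_fn_def
      by (rule_tac mono_on_subset) auto
    show "continuous_on {z..tb} g" using that(2) by (rule continuous_on_subset) (use that in auto)
  qed
  have R0eq: "R0 tb F f s = integral {0..tb} (\<lambda>t. s t * (J t * f t))" for s
    unfolding R0_def J_def by (rule integral_cong) (simp add: algebra_simps)
  have JF: "continuous_on {0..tb} (\<lambda>t. J t * f t)"
    by (intro continuous_intros Jcont f_cont)
  have AB: "R0 tb F f s' \<le> R0 tb F f s"
    if Jm: "mono_on {0..tb} J" and st: "status_fn tb s" "status_fn tb s'" "MPS tb f s' s" for s s'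
  proof -
    define h where "h = (\<lambda>t. s t * f t - s' t * f t)"
    have hz: "integral {z..tb} h = integral {z..tb} (\<lambda>t. s t * f t) - integral {z..tb} (\<lambda>t. s' t * f t)"
      if "z \<in> {0..tb}" for z
      unfolding h_def using sint[OF st(1) f_cont that] sint[OF st(2) f_cont that] by (rule integral_diff)
    have hint: "h integrable_on {0..tb}"
      unfolding h_def using sint[OF st(1) f_cont] sint[OF st(2) f_cont] tb_pos
      by (intro integrable_diff) auto
    have D: "\<forall>x\<in>{0..tb}. integral {x..tb} h \<ge> 0"
      using st(3) hz unfolding MPS_def by auto
    have z: "integral {0..tb} h = 0"
      using st(3) hz[of 0] tb_pos unfolding MPS_def by auto
    have "integral {0..tb} (\<lambda>x. J x * h x) \<ge> 0"
      using smvt_nonneg[OF _ Jm hint D z] tb_pos by auto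
    moreover have "integral {0..tb} (\<lambda>x. J x * h x) = R0 tb F f s - R0 tb F f s'"
    proof -
      have "integral {0..tb} (\<lambda>x. J x * h x) =
            integral {0..tb} (\<lambda>t. s t * (J t * f t) - s' t * (J t * f t))"
        unfolding h_def by (rule integral_cong) (simp add: algebra_simps)
      also have "\<dots> = R0 tb F f s - R0 tb F f s'"
        unfolding R0eq using sint[OF st(1) JF] sint[OF st(2) JF] tb_pos
        by (intro integral_diff) auto
      finally show ?thesis .
    qed
    ultimately show ?thesis by simp
  qed
  have CA: "mono_on {0..tb} J" if C: "\<forall>s\<in>S0 tb F f. R0 tb F f s \<le> R0 tb F f F"
  proof (rule ccontr)
    assume "\<not> mono_on {0..tb} J"
    then obtain x y where xy: "x \<in> {0..tb}" "y \<in> {0..tb}" "x \<le> y" "J y < J x"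
      unfolding mono_on_def monotone_on_def by force
    have xlty: "x < y" using xy by (cases "x = y") auto
    define d where "d = (J x - J y) / 3"
    have d0: "d > 0" using xy unfolding d_def by simp
    have "J x - J y = 3 * d" unfolding d_def by simp
    obtain d1 where d1: "d1 > 0" "\<And>t. t \<in> {0..tb} \<Longrightarrow> dist t x < d1 \<Longrightarrow> dist (J t) (J x) < d"
      using Jcont xy(1) d0 unfolding continuous_on_iff by meson
    obtain d2 where d2: "d2 > 0" "\<And>t. t \<in> {0..tb} \<Longrightarrow> dist t y < d2 \<Longrightarrow> dist (J t) (J y) < d"
      using Jcont xy(2) d0 unfolding continuous_on_iff by meson
    define \<delta> where "\<delta> = min d1 (min d2 ((y - x) / 2))"
    have \<delta>0: "\<delta> > 0" using d1 d2 xlty unfolding \<delta>_def by auto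
    have \<delta>xy: "x + \<delta> \<le> y - \<delta>" unfolding \<delta>_def by (simp add: min_def field_simps)
    define p1 where "p1 = (\<lambda>t. max 0 (\<delta> - \<bar>t - x\<bar>))"
    define p2 where "p2 = (\<lambda>t. max 0 (\<delta> - \<bar>t - y\<bar>))"
    have p1c: "continuous_on {0..tb} p1" unfolding p1_def by (intro continuous_intros)
    have p2c: "continuous_on {0..tb} p2" unfolding p2_def by (intro continuous_intros)
    have p1n: "p1 t \<ge> 0" "p2 t \<ge> 0" for t unfolding p1_def p2_def by auto
    have p1L: "\<bar>p1 v - p1 u\<bar> \<le> \<bar>v - u\<bar>" "\<bar>p2 v - p2 u\<bar> \<le> \<bar>v - u\<bar>" for u v
      unfolding p1_def p2_def by (auto simp: max_def abs_if)
    have p1z: "p1 t = 0" if "t \<ge> x + \<delta>" for t unfolding p1_def using that by auto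
    have p2z: "p2 t = 0" if "t \<le> y - \<delta>" for t unfolding p2_def using that by auto
    have J1: "J t * (p1 t * f t) \<ge> (J x - d) * (p1 t * f t)" if "t \<in> {0..tb}" for t
    proof (cases "p1 t = 0")
      case False
      then have "\<bar>t - x\<bar> < \<delta>" unfolding p1_def by (auto simp: max_def split: if_splits)
      moreover have "\<delta> \<le> d1" unfolding \<delta>_def by simp
      ultimately have "dist t x < d1" unfolding dist_real_def by simp
      then have a: "J t \<ge> J x - d" using d1(2)[OF that] unfolding dist_real_def by auto
      have "0 \<le> p1 t * f t" using p1n(1)[of t] f_pos that by (metis less_imp_le mult_nonneg_nonneg)
      then show ?thesis using mult_right_mono[OF a] by blast
    qed simp
    have J2: "J t * (p2 t * f t) \<le> (J y + d) * (p2 t * f t)" if "t \<in> {0..tb}" for t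
    proof (cases "p2 t = 0")
      case False
      then have "\<bar>t - y\<bar> < \<delta>" unfolding p2_def by (auto simp: max_def split: if_splits)
      moreover have "\<delta> \<le> d2" unfolding \<delta>_def by simp
      ultimately have "dist t y < d2" unfolding dist_real_def by simp
      then have a: "J t \<le> J y + d" using d2(2)[OF that] unfolding dist_real_def by auto
      have "0 \<le> p2 t * f t" using p1n(2)[of t] f_pos that by (metis less_imp_le mult_nonneg_nonneg)
      then show ?thesis using mult_right_mono[OF a] by blast
    qed simp
    have q1c: "continuous_on {0..tb} (\<lambda>t. p1 t * f t)" by (intro continuous_intros p1c f_cont)
    have q2c: "continuous_on {0..tb} (\<lambda>t. p2 t * f t)" by (intro continuous_intros p2c f_cont)
    have qint: "(\<lambda>t. p1 t * f t) integrable_on {z..w}" "(\<lambda>t. p2 t * f t) integrable_on {z..w}"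
      if "0 \<le> z" "w \<le> tb" for z w
      using integrable_continuous_interval[OF continuous_on_subset[OF q1c]]
        integrable_continuous_interval[OF continuous_on_subset[OF q2c]] that by auto
    have qn1: "0 \<le> p1 t * f t" if "t \<in> {0..tb}" for t
      using p1n(1)[of t] f_pos that by (metis less_imp_le mult_nonneg_nonneg)
    have qn2: "0 \<le> p2 t * f t" if "t \<in> {0..tb}" for t
      using p1n(2)[of t] f_pos that by (metis less_imp_le mult_nonneg_nonneg)
    define I1 where "I1 = integral {0..tb} (\<lambda>t. p1 t * f t)"
    define I2 where "I2 = integral {0..tb} (\<lambda>t. p2 t * f t)"
    have I1pos: "I1 > 0"
    proof -
      have "I1 \<ge> 0" unfolding I1_def using qint(1)[of 0 tb] qn1 by (intro integral_nonneg) auto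
      moreover have "p1 x * f x \<noteq> 0" using \<delta>0 f_pos[rule_format, OF xy(1)] unfolding p1_def by auto
      then have "I1 \<noteq> 0" unfolding I1_def using integral_eq_0_iff[OF q1c tb_pos] xy qn1 by blast
      ultimately show ?thesis by simp
    qed
    have I2pos: "I2 > 0"
    proof -
      have "I2 \<ge> 0" unfolding I2_def using qint(2)[of 0 tb] qn2 by (intro integral_nonneg) auto
      moreover have "p2 y * f y \<noteq> 0" using \<delta>0 f_pos[rule_format, OF xy(2)] unfolding p2_def by auto
      then have "I2 \<noteq> 0" unfolding I2_def using integral_eq_0_iff[OF q2c tb_pos] xy qn2 by blast
      ultimately show ?thesis by simp
    qed
    define c1 where "c1 = 1 / I1"
    define c2 where "c2 = 1 / I2"
    have c1: "c1 > 0" "c1 * I1 = 1" unfolding c1_def using I1pos by auto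
    have c2: "c2 > 0" "c2 * I2 = 1" unfolding c2_def using I2pos by auto
    define \<epsilon> where "\<epsilon> = m / (c1 + c2)"
    have \<epsilon>: "\<epsilon> > 0" "\<epsilon> * (c1 + c2) = m" unfolding \<epsilon>_def using c1 c2 m0 by auto
    define s where "s = (\<lambda>t. F t + \<epsilon> * (c1 * p1 t - c2 * p2 t))"
    have smono: "s u \<le> s v" if "0 \<le> u" "u \<le> v" "v \<le> tb" for u v
    proof -
      have b1: "-(v-u) \<le> p1 v - p1 u" using p1L(1)[of v u] that by (auto simp: abs_le_iff)
      have b2: "p2 v - p2 u \<le> v - u" using p1L(2)[of v u] that by (auto simp: abs_le_iff)
      have a1: "c1 * (p1 v - p1 u) \<ge> - (c1 * (v - u))"
        using mult_left_mono[OF b1 less_imp_le[OF c1(1)]] by (simp add: algebra_simps)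
      have a2: "c2 * (p2 v - p2 u) \<le> c2 * (v - u)"
        using mult_left_mono[OF b2 less_imp_le[OF c2(1)]] by (simp add: algebra_simps)
      have "(c1 * p1 v - c2 * p2 v) - (c1 * p1 u - c2 * p2 u) \<ge> - ((c1 + c2) * (v - u))"
        using a1 a2 by (simp add: algebra_simps)
      then have "\<epsilon> * ((c1 * p1 v - c2 * p2 v) - (c1 * p1 u - c2 * p2 u)) \<ge> \<epsilon> * (- ((c1 + c2) * (v - u)))"
        using \<epsilon>(1) by (intro mult_left_mono) auto
      also have "\<epsilon> * (- ((c1 + c2) * (v - u))) = - ((\<epsilon> * (c1 + c2)) * (v - u))"
        by (simp only: mult.assoc mult_minus_right)
      also have "\<dots> = - (m * (v - u))" using \<epsilon>(2) by simp
      finally show ?thesis using Fgrow[OF that] unfolding s_def by (simp add: algebra_simps)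
    qed
    have s0: "s 0 \<ge> 0"
    proof -
      have "p2 0 = 0" using p2z[of 0] \<delta>xy xy by auto
      then show ?thesis unfolding s_def using F0 \<epsilon> c1 p1n by auto
    qed
    have s1: "s tb \<le> 1"
    proof -
      have "p1 tb = 0" using p1z[of tb] \<delta>xy xy \<delta>0 by auto
      then show ?thesis unfolding s_def using Ftb \<epsilon> c2 p1n(2)[of tb] by auto
    qed
    have sb: "0 \<le> s t \<and> s t \<le> 1" if "t \<in> {0..tb}" for t
      using smono[of 0 t] smono[of t tb] s0 s1 that by auto
    have sstat: "status_fn tb s"
      unfolding status_fn_def mono_on_def monotone_on_def
      using smono sb by auto
    have Fcf: "continuous_on {0..tb} (\<lambda>t. F t * f t)" by (intro continuous_intros Fcont f_cont)
    have sf: "integral {z..tb} (\<lambda>t. s t * f t) = integral {z..tb} (\<lambda>t. F t * f t)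
          + \<epsilon> * (c1 * integral {z..tb} (\<lambda>t. p1 t * f t) - c2 * integral {z..tb} (\<lambda>t. p2 t * f t))"
      if "z \<in> {0..tb}" for z
    proof -
      have i0: "(\<lambda>t. F t * f t) integrable_on {z..tb}"
        using integrable_continuous_interval[OF continuous_on_subset[OF Fcf]] that by auto
      have i1: "(\<lambda>t. (\<epsilon> * c1) * (p1 t * f t)) integrable_on {z..tb}"
        using qint(1)[of z tb] that by (intro integrable_on_mult_right) auto
      have i2: "(\<lambda>t. (\<epsilon> * c2) * (p2 t * f t)) integrable_on {z..tb}"
        using qint(2)[of z tb] that by (intro integrable_on_mult_right) auto
      have "integral {z..tb} (\<lambda>t. s t * f t) = integral {z..tb} (\<lambda>t. (F t * f t + (\<epsilon> * c1) * (p1 t * f t)) - (\<epsilon> * c2) * (p2 t * f t))"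
        unfolding s_def by (rule integral_cong) (simp add: algebra_simps)
      also have "\<dots> = integral {z..tb} (\<lambda>t. F t * f t) + (\<epsilon> * c1) * integral {z..tb} (\<lambda>t. p1 t * f t)
          - (\<epsilon> * c2) * integral {z..tb} (\<lambda>t. p2 t * f t)"
        using i0 i1 i2 by (simp add: integral_diff integral_add integrable_add)
      finally show ?thesis by (simp add: algebra_simps)
    qed
    have key: "c1 * integral {z..tb} (\<lambda>t. p1 t * f t) \<le> c2 * integral {z..tb} (\<lambda>t. p2 t * f t)"
      if "z \<in> {0..tb}" for z
    proof (cases "z \<le> y - \<delta>")
      case True
      have "integral {0..z} (\<lambda>t. p1 t * f t) + integral {z..tb} (\<lambda>t. p1 t * f t) = I1"
        unfolding I1_def using that qint(1)[of 0 tb]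
        by (intro Henstock_Kurzweil_Integration.integral_combine) auto
      moreover have "integral {0..z} (\<lambda>t. p1 t * f t) \<ge> 0"
        using qint(1)[of 0 z] that qn1 by (intro integral_nonneg) auto
      ultimately have "integral {z..tb} (\<lambda>t. p1 t * f t) \<le> I1" by linarith
      then have l: "c1 * integral {z..tb} (\<lambda>t. p1 t * f t) \<le> 1"
        using c1 mult_left_mono[of _ I1 c1] by fastforce
      have "integral {0..z} (\<lambda>t. p2 t * f t) + integral {z..tb} (\<lambda>t. p2 t * f t) = I2"
        unfolding I2_def using that qint(2)[of 0 tb]
        by (intro Henstock_Kurzweil_Integration.integral_combine) auto
      moreover have "integral {0..z} (\<lambda>t. p2 t * f t) = integral {0..z} (\<lambda>t. 0)"
        using p2z True by (intro integral_cong) auto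
      ultimately have "integral {z..tb} (\<lambda>t. p2 t * f t) = I2" by simp
      then show ?thesis using l c2 by simp
    next
      case False
      have "integral {z..tb} (\<lambda>t. p1 t * f t) = integral {z..tb} (\<lambda>t. 0)"
        using p1z False \<delta>xy by (intro integral_cong) auto
      moreover have "integral {z..tb} (\<lambda>t. p2 t * f t) \<ge> 0"
        using qint(2)[of z tb] that qn2 by (intro integral_nonneg) auto
      ultimately show ?thesis using c2 by simp
    qed
    have sMPS: "MPS tb f s F"
      unfolding MPS_def
    proof (intro conjI ballI)
      fix z assume z: "z \<in> {0..tb}"
      show "integral {z..tb} (\<lambda>t. s t * f t) \<le> integral {z..tb} (\<lambda>t. F t * f t)"
        using sf[OF z] key[OF z] \<epsilon>(1) mult_left_mono[of _ 0 \<epsilon>] by (simp add: mult_le_0_iff)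
    next
      show "integral {0..tb} (\<lambda>t. s t * f t) = integral {0..tb} (\<lambda>t. F t * f t)"
        using sf[of 0] tb_pos c1 c2 unfolding I1_def I2_def by simp
    qed
    have "s \<in> S0 tb F f" unfolding S0_def using sstat sMPS by auto
    then have le: "R0 tb F f s \<le> R0 tb F f F" using C by blast
    define K1 where "K1 = integral {0..tb} (\<lambda>t. J t * (p1 t * f t))"
    define K2 where "K2 = integral {0..tb} (\<lambda>t. J t * (p2 t * f t))"
    have k1c: "continuous_on {0..tb} (\<lambda>t. J t * (p1 t * f t))" by (intro continuous_intros Jcont q1c)
    have k2c: "continuous_on {0..tb} (\<lambda>t. J t * (p2 t * f t))" by (intro continuous_intros Jcont q2c)
    have K1ge: "K1 \<ge> (J x - d) * I1"
    proof -
      have "integral {0..tb} (\<lambda>t. (J x - d) * (p1 t * f t)) \<le> K1"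
        unfolding K1_def using J1 qint(1)[of 0 tb] integrable_continuous_interval[OF k1c]
        by (intro integral_le integrable_on_mult_right) auto
      then show ?thesis unfolding I1_def by simp
    qed
    have K2le: "K2 \<le> (J y + d) * I2"
    proof -
      have "K2 \<le> integral {0..tb} (\<lambda>t. (J y + d) * (p2 t * f t))"
        unfolding K2_def using J2 qint(2)[of 0 tb] integrable_continuous_interval[OF k2c]
        by (intro integral_le integrable_on_mult_right) auto
      then show ?thesis unfolding I2_def by simp
    qed
    have e1: "c1 * ((J x - d) * I1) = J x - d"
    proof -
      have "c1 * ((J x - d) * I1) = (J x - d) * (c1 * I1)" by (simp only: mult_ac)
      then show ?thesis using c1(2) by simp
    qed
    have e2: "c2 * ((J y + d) * I2) = J y + d"
    proof -
      have "c2 * ((J y + d) * I2) = (J y + d) * (c2 * I2)" by (simp only: mult_ac)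
      then show ?thesis using c2(2) by simp
    qed
    have "c1 * K1 \<ge> J x - d"
      using mult_left_mono[OF K1ge less_imp_le[OF c1(1)]] e1 by simp
    moreover have "c2 * K2 \<le> J y + d"
      using mult_left_mono[OF K2le less_imp_le[OF c2(1)]] e2 by simp
    ultimately have pos: "c1 * K1 - c2 * K2 > 0" using d0 \<open>J x - J y = 3 * d\<close> by linarith
    have "R0 tb F f s = R0 tb F f F + \<epsilon> * (c1 * K1 - c2 * K2)"
    proof -
      have Fi: "(\<lambda>t. F t * (J t * f t)) integrable_on {0..tb}"
        using sint[OF Fstat JF, of 0] tb_pos by auto
      have i1: "(\<lambda>t. (\<epsilon> * c1) * (J t * (p1 t * f t))) integrable_on {0..tb}"
        using integrable_continuous_interval[OF k1c] by (intro integrable_on_mult_right)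
      have i2: "(\<lambda>t. (\<epsilon> * c2) * (J t * (p2 t * f t))) integrable_on {0..tb}"
        using integrable_continuous_interval[OF k2c] by (intro integrable_on_mult_right)
      have "R0 tb F f s = integral {0..tb} (\<lambda>t. (F t * (J t * f t) + (\<epsilon> * c1) * (J t * (p1 t * f t))) - (\<epsilon> * c2) * (J t * (p2 t * f t)))"
        unfolding R0eq s_def by (rule integral_cong) (simp add: algebra_simps)
      also have "\<dots> = R0 tb F f F + (\<epsilon> * c1) * K1 - (\<epsilon> * c2) * K2"
        unfolding R0eq K1_def K2_def using Fi i1 i2 by (simp add: integral_diff integral_add integrable_add)
      finally show ?thesis by (simp add: algebra_simps)
    qed
    then have "R0 tb F f s > R0 tb F f F" using pos \<epsilon>(1) by simp
    then show False using le by simp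
  qed
  have BC: "\<forall>s\<in>S0 tb F f. R0 tb F f s \<le> R0 tb F f F"
    if B: "\<forall>s s'. status_fn tb s \<and> status_fn tb s' \<and> MPS tb f s' s \<longrightarrow> R0 tb F f s' \<le> R0 tb F f s"
    using B Fstat unfolding S0_def by blast
  show ?thesis
    unfolding J_def[symmetric] using AB BC CA by blast
qed
end
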